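(* Let $L_1=\langle\mathbf{A}_1,D_1\rangle$ and $L_2=\langle\mathbf{A}_2,D_2\rangle$ be two matrix logics over the same propositional signature such that $\mathbf{A}_2$ is a subalgebra of $\mathbf{A}_1$ and $D_2=D_1\cap A_2$. Suppose there is a formula $\circ'(p)$ depending on a single propositional variable $p$ such that, for every valuation $\vartheta$ over $L_1$ and every formula $\alpha$, $\vartheta(\circ'\alpha)\in D_1$ iff $\vartheta(\alpha)\in A_2$. Then for every set of formulas $\Gamma$ and formula $\alpha$: $\circ'(Var(\Gamma\cup\{\alpha\})),\Gamma\vdash_{L_1}\alpha$ iff $\Gamma\vdash_{L_2}\alpha$, where $\circ'(X)=\{\circ'(p): p\in X\}$ for a set $X$ of propositional variables.
   Context: A matrix logic $\langle\mathbf{A},D\rangle$ consists of an algebra $\mathbf{A}$ of the signature and a set $D\subseteq A$ of designated values; a valuation is a homomorphism from the formula algebra into $\mathbf{A}$, and $\Gamma\vdash\alpha$ iff every valuation $\vartheta$ with $\vartheta[\Gamma]\subseteq D$ has $\vartheta(\alpha)\in D$. $Var(\Delta)$ is the set of propositional variables occurring in the formulas of $\Delta$; $\circ'\alpha$ denotes the result of substituting $\alpha$ for $p$ in $\circ'(p)$. *)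

theory Defs
  imports Main
begin

datatype 'c fm = Var nat | Op 'c "'c fm list"

fun wf_fm :: "('c \<Rightarrow> nat) \<Rightarrow> 'c fm \<Rightarrow> bool" where
  "wf_fm ar (Var p) = True"
| "wf_fm ar (Op c as) = (length as = ar c \<and> (\<forall>a\<in>set as. wf_fm ar a))"

fun fvars :: "'c fm \<Rightarrow> nat set" where
  "fvars (Var p) = {p}"
| "fvars (Op c as) = (\<Union>a\<in>set as. fvars a)"

fun subst :: "(nat \<Rightarrow> 'c fm) \<Rightarrow> 'c fm \<Rightarrow> 'c fm" where
  "subst s (Var p) = s p"
| "subst s (Op c as) = Op c (map (subst s) as)"

fun eval :: "('c \<Rightarrow> 'a list \<Rightarrow> 'a) \<Rightarrow> (nat \<Rightarrow> 'a) \<Rightarrow> 'c fm \<Rightarrow> 'a" where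
  "eval f v (Var p) = v p"
| "eval f v (Op c as) = f c (map (eval f v) as)"

text \<open>The set A is closed under the operations f (so (A, f restricted to A) is an algebra).\<close>
definition closed_ops :: "('c \<Rightarrow> nat) \<Rightarrow> ('c \<Rightarrow> 'a list \<Rightarrow> 'a) \<Rightarrow> 'a set \<Rightarrow> bool" where
  "closed_ops ar f A \<longleftrightarrow> (\<forall>c xs. length xs = ar c \<longrightarrow> set xs \<subseteq> A \<longrightarrow> f c xs \<in> A)"

definition mcons :: "('c \<Rightarrow> 'a list \<Rightarrow> 'a) \<Rightarrow> 'a set \<Rightarrow> 'a set \<Rightarrow> 'c fm set \<Rightarrow> 'c fm \<Rightarrow> bool" where
  "mcons f A D \<Gamma> \<phi> \<longleftrightarrow>
     (\<forall>v. range v \<subseteq> A \<longrightarrow> (\<forall>\<gamma>\<in>\<Gamma>. eval f v \<gamma> \<in> D) \<longrightarrow> eval f v \<phi> \<in> D)"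

definition inst :: "'c fm \<Rightarrow> nat \<Rightarrow> 'c fm \<Rightarrow> 'c fm" where
  "inst circ p \<alpha> = subst (\<lambda>q. if q = p then \<alpha> else Var q) circ"

end

theory Submission
  imports Defs
begin

lemma eval_agree: "(\<forall>q\<in>fvars \<phi>. v q = w q) \<Longrightarrow> eval f v \<phi> = eval f w \<phi>"
  by (induction \<phi>) (auto cong: map_cong)

lemma eval_closed: "closed_ops ar f B \<Longrightarrow> wf_fm ar \<phi> \<Longrightarrow> (\<forall>q\<in>fvars \<phi>. v q \<in> B) \<Longrightarrow> eval f v \<phi> \<in> B"
proof (induction \<phi>)
  case (Var x) then show ?case by simp
next
  case (Op c as)
  have "set (map (eval f v) as) \<subseteq> B" using Op by auto
  then show ?case using Op unfolding closed_ops_def by simp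
qed

theorem theorem19:
  fixes ar :: "'c \<Rightarrow> nat" and f :: "'c \<Rightarrow> 'a list \<Rightarrow> 'a"
    and A1 A2 D1 D2 :: "'a set" and circ :: "'c fm" and p :: nat
  assumes alg1: "closed_ops ar f A1"
    and sub: "A2 \<subseteq> A1" and alg2: "closed_ops ar f A2"
    and D1: "D1 \<subseteq> A1"
    and D2: "D2 = D1 \<inter> A2"
    and wf_circ: "wf_fm ar circ" and vars_circ: "fvars circ = {p}"
    and circ_prop: "\<And>v \<alpha>. range v \<subseteq> A1 \<Longrightarrow> wf_fm ar \<alpha> \<Longrightarrow>
        (eval f v (inst circ p \<alpha>) \<in> D1 \<longleftrightarrow> eval f v \<alpha> \<in> A2)"
    and wf_Gamma: "\<forall>\<gamma>\<in>\<Gamma>. wf_fm ar \<gamma>" and wf_alpha: "wf_fm ar \<alpha>"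
  shows "mcons f A1 D1 ((\<lambda>q. inst circ p (Var q)) ` (\<Union>\<phi>\<in>\<Gamma> \<union> {\<alpha>}. fvars \<phi>) \<union> \<Gamma>) \<alpha>
         \<longleftrightarrow> mcons f A2 D2 \<Gamma> \<alpha>"
proof
  let ?V = "\<Union>\<phi>\<in>\<Gamma> \<union> {\<alpha>}. fvars \<phi>"
  assume L: "mcons f A1 D1 ((\<lambda>q. inst circ p (Var q)) ` ?V \<union> \<Gamma>) \<alpha>"
  show "mcons f A2 D2 \<Gamma> \<alpha>"
    unfolding mcons_def
  proof (intro allI impI)
    fix v assume rv: "range v \<subseteq> A2" and G: "\<forall>\<gamma>\<in>\<Gamma>. eval f v \<gamma> \<in> D2"
    have rv1: "range v \<subseteq> A1" using rv sub by blast
    have "\<forall>\<gamma>\<in>(\<lambda>q. inst circ p (Var q)) ` ?V \<union> \<Gamma>. eval f v \<gamma> \<in> D1"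
    proof
      fix \<gamma> assume "\<gamma> \<in> (\<lambda>q. inst circ p (Var q)) ` ?V \<union> \<Gamma>"
      then show "eval f v \<gamma> \<in> D1"
      proof
        assume "\<gamma> \<in> (\<lambda>q. inst circ p (Var q)) ` ?V"
        then obtain q where "\<gamma> = inst circ p (Var q)" by blast
        then show ?thesis using circ_prop[OF rv1, of "Var q"] rv by auto
      next
        assume "\<gamma> \<in> \<Gamma>" then show ?thesis using G D2 by auto
      qed
    qed
    then have "eval f v \<alpha> \<in> D1" using L rv1 unfolding mcons_def by blast
    moreover have "eval f v \<alpha> \<in> A2" using eval_closed[OF alg2 wf_alpha] rv by auto
    ultimately show "eval f v \<alpha> \<in> D2" using D2 by auto
  qed
next
  let ?V = "\<Union>\<phi>\<in>\<Gamma> \<union> {\<alpha>}. fvars \<phi>"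
  assume R: "mcons f A2 D2 \<Gamma> \<alpha>"
  show "mcons f A1 D1 ((\<lambda>q. inst circ p (Var q)) ` ?V \<union> \<Gamma>) \<alpha>"
    unfolding mcons_def
  proof (intro allI impI)
    fix v assume rv1: "range v \<subseteq> A1" and H: "\<forall>\<gamma>\<in>(\<lambda>q. inst circ p (Var q)) ` ?V \<union> \<Gamma>. eval f v \<gamma> \<in> D1"
    have VA: "v q \<in> A2" if "q \<in> ?V" for q
    proof -
      have "eval f v (inst circ p (Var q)) \<in> D1" using H that by blast
      then show ?thesis using circ_prop[OF rv1, of "Var q"] by simp
    qed
    show "eval f v \<alpha> \<in> D1"
    proof (cases "A2 = {}")
      case True
      then have "fvars \<alpha> = {}" using VA by blast
      then have "eval f v \<alpha> \<in> A2" using eval_closed[OF alg2 wf_alpha] by auto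
      then show ?thesis using True by simp
    next
      case False
      then obtain a0 where a0: "a0 \<in> A2" by blast
      define w where "w = (\<lambda>q. if q \<in> ?V then v q else a0)"
      have rw: "range w \<subseteq> A2" using VA a0 unfolding w_def by auto
      have agr: "eval f w \<phi> = eval f v \<phi>" if "\<phi> \<in> \<Gamma> \<union> {\<alpha>}" for \<phi>
        by (rule eval_agree) (use that in \<open>auto simp: w_def\<close>)
      have "\<forall>\<gamma>\<in>\<Gamma>. eval f w \<gamma> \<in> D2"
      proof
        fix \<gamma> assume g: "\<gamma> \<in> \<Gamma>"
        have "eval f w \<gamma> \<in> A2" using eval_closed[OF alg2, of \<gamma> w] wf_Gamma g rw by auto
        moreover have "eval f w \<gamma> \<in> D1" using agr[of \<gamma>] g H by auto
        ultimately show "eval f w \<gamma> \<in> D2" using D2 by auto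
      qed
      then have "eval f w \<alpha> \<in> D2" using R rw unfolding mcons_def by blast
      then show ?thesis using agr[of \<alpha>] D2 by auto
    qed
  qed
qed

end
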